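(* Let $X_1,\ldots,X_n$ be non-empty sets, $\Omega=X_1\times\cdots\times X_n$, and let $S\subset\Omega$ be a good set with related components $\{R_\alpha\}$. For each $i$, let $E_i$ be the equivalence relation on $\Pi_iS$ defined by: $x_iE_iy_i$ iff there is a finite sequence of related components $R_1,\ldots,R_m$ of $S$ with $x_i\in\Pi_iR_1$, $y_i\in\Pi_iR_m$ and $\Pi_iR_j\cap\Pi_iR_{j+1}\neq\emptyset$ for $1\le j\le m-1$. Let $[x_i]$ denote the $E_i$-class of $x_i$ and $\mathcal F_i$ the set of $E_i$-classes. Let $C\subset S$ be a cross-section of the related components (i.e. $C$ contains exactly one point of each $R_\alpha$), and define $\phi:C\to\mathcal F_1\times\cdots\times\mathcal F_n$ by $\phi(x_1,\ldots,x_n)=([x_1],\ldots,[x_n])$. Then $\phi(C)$ is a good subset of $\mathcal F_1\times\cdots\times\mathcal F_n$, and $S$ is full if and only if $\phi(C)$ is full.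
   Context: For a product $Y_1\times\cdots\times Y_n$ of non-empty sets, $\Pi_i$ denotes the canonical projection onto $Y_i$. A subset $T$ of such a product is good if every complex-valued function $f$ on $T$ can be written as $f(y_1,\ldots,y_n)=u_1(y_1)+\cdots+u_n(y_n)$ on $T$ for suitable complex-valued functions $u_i$ on $Y_i$. $T$ is full if it is a maximal good subset of $\Pi_1T\times\cdots\times\Pi_nT$. For a good set $S$, two points of $S$ are related if some finite full subset of $S$ contains both; this is an equivalence relation whose classes are the related components of $S$. *)

theory Defs
  imports Complex_Main "HOL-Library.FuncSet"
begin

text \<open>Points of X_1 x ... x X_n are extensional functions on {..<n} (PiE {..<n} X).\<close>

definition proj :: "nat \<Rightarrow> (nat \<Rightarrow> 'a) set \<Rightarrow> 'a set" where
  "proj i T = (\<lambda>t. t i) ` T"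

definition good :: "nat \<Rightarrow> (nat \<Rightarrow> 'a) set \<Rightarrow> bool" where
  "good n T \<longleftrightarrow> (\<forall>f :: (nat \<Rightarrow> 'a) \<Rightarrow> complex. \<exists>u :: nat \<Rightarrow> 'a \<Rightarrow> complex.
      \<forall>t\<in>T. f t = (\<Sum>i<n. u i (t i)))"

definition full :: "nat \<Rightarrow> (nat \<Rightarrow> 'a) set \<Rightarrow> bool" where
  "full n T \<longleftrightarrow> T \<subseteq> PiE {..<n} (\<lambda>i. proj i T) \<and> good n T \<and>
     (\<forall>T'. T \<subseteq> T' \<and> T' \<subseteq> PiE {..<n} (\<lambda>i. proj i T) \<and> good n T' \<longrightarrow> T' = T)"

definition related :: "nat \<Rightarrow> (nat \<Rightarrow> 'a) set \<Rightarrow> (nat \<Rightarrow> 'a) \<Rightarrow> (nat \<Rightarrow> 'a) \<Rightarrow> bool" where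
  "related n S x y \<longleftrightarrow> (\<exists>F. finite F \<and> F \<subseteq> S \<and> full n F \<and> x \<in> F \<and> y \<in> F)"

definition rel_components :: "nat \<Rightarrow> (nat \<Rightarrow> 'a) set \<Rightarrow> (nat \<Rightarrow> 'a) set set" where
  "rel_components n S = S // {(x, y). related n S x y}"

definition Erel :: "nat \<Rightarrow> (nat \<Rightarrow> 'a) set \<Rightarrow> nat \<Rightarrow> 'a \<Rightarrow> 'a \<Rightarrow> bool" where
  "Erel n S i x y \<longleftrightarrow> x \<in> proj i S \<and> y \<in> proj i S \<and>
     (\<exists>Rs. Rs \<noteq> [] \<and> set Rs \<subseteq> rel_components n S \<and>
        x \<in> proj i (hd Rs) \<and> y \<in> proj i (last Rs) \<and>
        (\<forall>j. Suc j < length Rs \<longrightarrow> proj i (Rs ! j) \<inter> proj i (Rs ! Suc j) \<noteq> {}))"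

definition eclass :: "nat \<Rightarrow> (nat \<Rightarrow> 'a) set \<Rightarrow> nat \<Rightarrow> 'a \<Rightarrow> 'a set" where
  "eclass n S i x = {y. Erel n S i x y}"

definition classes :: "nat \<Rightarrow> (nat \<Rightarrow> 'a) set \<Rightarrow> nat \<Rightarrow> 'a set set" where
  "classes n S i = proj i S // {(x, y). Erel n S i x y}"

definition phi :: "nat \<Rightarrow> (nat \<Rightarrow> 'a) set \<Rightarrow> (nat \<Rightarrow> 'a) \<Rightarrow> (nat \<Rightarrow> 'a set)" where
  "phi n S c = restrict (\<lambda>i. eclass n S i (c i)) {..<n}"

end

theory Submission
  imports Defs
begin

lemma good_subset: "good n T \<Longrightarrow> T' \<subseteq> T \<Longrightarrow> good n T'"
  unfolding good_def by blast

lemma sub_PiE_proj: "T \<subseteq> PiE {..<n} X \<Longrightarrow> T \<subseteq> PiE {..<n} (\<lambda>i. proj i T)"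
  by (auto simp: PiE_iff proj_def)

lemma good0: "good 0 T \<Longrightarrow> T = {}"
  unfolding good_def by (erule allE[where x="\<lambda>_. 1"]) auto

lemma full_empty: "full n {}"
proof -
  have "T' = {}" if "T' \<subseteq> PiE {..<n} (\<lambda>i. proj i {})" "good n T'" for T' :: "(nat \<Rightarrow> 'a) set"
  proof (cases n)
    case 0 then show ?thesis using good0 that by blast
  next
    case (Suc m)
    then have "PiE {..<n} (\<lambda>i. proj i ({}::(nat \<Rightarrow> 'a) set)) = {}"
      by (auto simp: PiE_eq_empty_iff proj_def)
    then show ?thesis using that by blast
  qed
  then show ?thesis unfolding full_def good_def by auto
qed

lemma full_zero_on_P:
  fixes u :: "nat \<Rightarrow> 'a \<Rightarrow> complex"
  assumes F: "full n T" and Z: "\<forall>t\<in>T. (\<Sum>i<n. u i (t i)) = 0"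
    and p: "p \<in> PiE {..<n} (\<lambda>i. proj i T)"
  shows "(\<Sum>i<n. u i (p i)) = 0"
proof (rule ccontr)
  assume ne: "(\<Sum>i<n. u i (p i)) \<noteq> 0"
  have pT: "p \<notin> T" using ne Z by auto
  have gT: "good n T" using F unfolding full_def by blast
  have "good n (insert p T)"
    unfolding good_def
  proof
    fix f :: "(nat \<Rightarrow> 'a) \<Rightarrow> complex"
    from gT obtain v where v: "\<forall>t\<in>T. f t = (\<Sum>i<n. v i (t i))" unfolding good_def by blast
    define c where "c = (f p - (\<Sum>i<n. v i (p i))) / (\<Sum>i<n. u i (p i))"
    have eq: "(\<Sum>i<n. v i (t i) + c * u i (t i)) = (\<Sum>i<n. v i (t i)) + c * (\<Sum>i<n. u i (t i))" for t
      by (simp add: sum.distrib sum_distrib_left)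
    show "\<exists>w. \<forall>t\<in>insert p T. f t = (\<Sum>i<n. w i (t i))"
    proof (intro exI ballI)
      fix t assume "t \<in> insert p T"
      then show "f t = (\<Sum>i<n. v i (t i) + c * u i (t i))"
      proof
        assume tp: "t = p"
        have "c * (\<Sum>i<n. u i (p i)) = f p - (\<Sum>i<n. v i (p i))" using ne by (simp add: c_def)
        then show ?thesis using tp by (simp only: eq) simp
      next
        assume "t \<in> T" then show ?thesis using Z v by (simp add: eq)
      qed
    qed
  qed
  moreover have "insert p T \<subseteq> PiE {..<n} (\<lambda>i. proj i T)" using p F unfolding full_def by blast
  ultimately have "insert p T = T" using F unfolding full_def by blast
  then show False using pT by blast
qed

lemma full_const:
  fixes u :: "nat \<Rightarrow> 'a \<Rightarrow> complex"
  assumes F: "full n T" and Z: "\<forall>t\<in>T. (\<Sum>i<n. u i (t i)) = 0"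
    and t0: "t0 \<in> T" and t: "t \<in> T" and i: "i < n"
  shows "u i (t i) = u i (t0 i)"
proof -
  have TP: "T \<subseteq> PiE {..<n} (\<lambda>i. proj i T)" using F unfolding full_def by blast
  define p where "p = t0(i := t i)"
  have "p \<in> PiE {..<n} (\<lambda>i. proj i T)"
    using TP t0 t i unfolding p_def by (auto simp: PiE_iff proj_def extensional_def)
  then have s1: "(\<Sum>k<n. u k (p k)) = 0" using full_zero_on_P[OF F Z] by blast
  have s2: "(\<Sum>k<n. u k (t0 k)) = 0" using Z t0 by blast
  have "(\<Sum>k<n. u k (p k)) = u i (p i) + (\<Sum>k\<in>{..<n}-{i}. u k (p k))"
    using i by (simp add: sum.remove)
  moreover have "(\<Sum>k<n. u k (t0 k)) = u i (t0 i) + (\<Sum>k\<in>{..<n}-{i}. u k (t0 k))"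
    using i by (simp add: sum.remove)
  moreover have "(\<Sum>k\<in>{..<n}-{i}. u k (p k)) = (\<Sum>k\<in>{..<n}-{i}. u k (t0 k))"
    by (rule sum.cong) (auto simp: p_def)
  ultimately have "u i (p i) + (\<Sum>k\<in>{..<n}-{i}. u k (t0 k)) = u i (t0 i) + (\<Sum>k\<in>{..<n}-{i}. u k (t0 k))"
    using s1 s2 by simp
  then show ?thesis by (simp add: p_def)
qed

lemma full_crit:
  fixes T :: "(nat \<Rightarrow> 'a) set"
  assumes g: "good n T" and TP: "T \<subseteq> PiE {..<n} (\<lambda>i. proj i T)" and ne: "T \<noteq> {}"
    and K: "\<And>u :: nat \<Rightarrow> 'a \<Rightarrow> complex. \<forall>t\<in>T. (\<Sum>i<n. u i (t i)) = 0 \<Longrightarrow>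
               \<forall>i<n. \<forall>s\<in>T. \<forall>t\<in>T. u i (s i) = u i (t i)"
  shows "full n T"
  unfolding full_def
proof (intro conjI g TP allI impI)
  fix T' assume H: "T \<subseteq> T' \<and> T' \<subseteq> PiE {..<n} (\<lambda>i. proj i T) \<and> good n T'"
  have "T' \<subseteq> T"
  proof
    fix q assume qT': "q \<in> T'"
    show "q \<in> T"
    proof (rule ccontr)
      assume qT: "q \<notin> T"
      have gT': "good n T'" using H by blast
      obtain u :: "nat \<Rightarrow> 'a \<Rightarrow> complex" where
        u: "\<forall>t\<in>T'. (if t = q then 1 else 0) = (\<Sum>i<n. u i (t i))"
        using gT' unfolding good_def by (erule_tac x="\<lambda>t. if t = q then 1 else (0::complex)" in allE) blast
      have Z: "\<forall>t\<in>T. (\<Sum>i<n. u i (t i)) = 0"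
      proof
        fix t assume tT: "t \<in> T"
        then have "t \<in> T'" "t \<noteq> q" using H qT by auto
        then show "(\<Sum>i<n. u i (t i)) = 0" using u by force
      qed
      from ne obtain t0 where t0: "t0 \<in> T" by blast
      have "(\<Sum>i<n. u i (q i)) = (\<Sum>i<n. u i (t0 i))"
      proof (rule sum.cong)
        fix i assume "i \<in> {..<n}"
        then have i: "i < n" by simp
        have "q i \<in> proj i T" using H qT' i by (auto simp: PiE_iff)
        then obtain t where t: "t \<in> T" "q i = t i" by (auto simp: proj_def)
        have "u i (t i) = u i (t0 i)" using K[OF Z] t(1) t0 i by blast
        then show "u i (q i) = u i (t0 i)" by (simp add: t(2))
      qed simp
      moreover have "(\<Sum>i<n. u i (q i)) = 1" using u qT' by force
      moreover have "(\<Sum>i<n. u i (t0 i)) = 0" using Z t0 by blast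
      ultimately show False by simp
    qed
  qed
  then show "T' = T" using H by blast
qed


context
  fixes n :: nat and X :: "nat \<Rightarrow> 'a set" and S :: "(nat \<Rightarrow> 'a) set"
  assumes npos: "0 < n" and SX: "S \<subseteq> PiE {..<n} X" and gS: "good n S"
begin

lemma full_single: "x \<in> S \<Longrightarrow> full n {x}"
proof (rule full_crit)
  assume x: "x \<in> S"
  show "good n {x}" unfolding good_def
  proof
    fix f :: "(nat \<Rightarrow> 'a) \<Rightarrow> complex"
    show "\<exists>u. \<forall>t\<in>{x}. f t = (\<Sum>i<n. u i (t i))"
      by (rule exI[where x="\<lambda>i y. if i = 0 then f x else 0"]) (simp add: npos)
  qed
  show "{x} \<subseteq> PiE {..<n} (\<lambda>i. proj i {x})" using x SX by (intro sub_PiE_proj) auto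
qed auto

lemma related_refl: "x \<in> S \<Longrightarrow> related n S x x"
  unfolding related_def using full_single by blast

lemma related_S: "related n S x y \<Longrightarrow> x \<in> S \<and> y \<in> S"
  unfolding related_def by blast

lemma related_sym: "related n S x y \<Longrightarrow> related n S y x"
  unfolding related_def by blast

lemma related_trans:
  assumes "related n S x y" "related n S y z" shows "related n S x z"
proof -
  from assms obtain F1 F2 where F1: "finite F1" "F1 \<subseteq> S" "full n F1" "x \<in> F1" "y \<in> F1"
    and F2: "finite F2" "F2 \<subseteq> S" "full n F2" "y \<in> F2" "z \<in> F2"
    unfolding related_def by blast
  have "full n (F1 \<union> F2)"
  proof (rule full_crit)
    show "good n (F1 \<union> F2)" using gS F1 F2 good_subset by blast
    show "F1 \<union> F2 \<subseteq> PiE {..<n} (\<lambda>i. proj i (F1 \<union> F2))"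
      using F1 F2 SX by (intro sub_PiE_proj) auto
    show "F1 \<union> F2 \<noteq> {}" using F1 by blast
    fix u :: "nat \<Rightarrow> 'a \<Rightarrow> complex"
    assume Z: "\<forall>t\<in>F1 \<union> F2. (\<Sum>i<n. u i (t i)) = 0"
    have "u i (s i) = u i (y i)" if "i < n" "s \<in> F1 \<union> F2" for i s
    proof -
      have Z1: "\<forall>t\<in>F1. (\<Sum>i<n. u i (t i)) = 0" and Z2: "\<forall>t\<in>F2. (\<Sum>i<n. u i (t i)) = 0"
        using Z by auto
      show ?thesis using that full_const[OF F1(3) Z1 F1(5)] full_const[OF F2(3) Z2 F2(4)] by blast
    qed
    then show "\<forall>i<n. \<forall>s\<in>F1 \<union> F2. \<forall>t\<in>F1 \<union> F2. u i (s i) = u i (t i)" by metis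
  qed
  then show ?thesis unfolding related_def using F1 F2 by blast
qed

definition rcomp :: "(nat \<Rightarrow> 'a) \<Rightarrow> (nat \<Rightarrow> 'a) set" where
  "rcomp x = {y. related n S x y}"

lemma comp_mem: "x \<in> S \<Longrightarrow> rcomp x \<in> rel_components n S"
proof -
  assume x: "x \<in> S"
  have "{(x, y). related n S x y} `` {x} = rcomp x" unfolding rcomp_def by auto
  then show ?thesis unfolding rel_components_def using quotientI[OF x] by metis
qed

lemma comp_self: "x \<in> S \<Longrightarrow> x \<in> rcomp x"
  unfolding rcomp_def using related_refl by blast

lemma comp_of: "R \<in> rel_components n S \<Longrightarrow> \<exists>x\<in>S. R = rcomp x"
  unfolding rel_components_def rcomp_def by (erule quotientE) auto

lemma comp_eq: "y \<in> rcomp x \<Longrightarrow> rcomp y = rcomp x"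
  unfolding rcomp_def using related_sym related_trans by blast

lemma comp_sub: "rcomp x \<subseteq> S"
  unfolding rcomp_def using related_S by blast

lemma comp_rel: "R \<in> rel_components n S \<Longrightarrow> s \<in> R \<Longrightarrow> t \<in> R \<Longrightarrow> related n S s t"
  using comp_of unfolding rcomp_def by (metis mem_Collect_eq related_sym related_trans)

lemma comps_sub: "R \<in> rel_components n S \<Longrightarrow> R \<subseteq> S"
  using comp_of comp_sub by blast

lemma comp_const:
  fixes v :: "nat \<Rightarrow> 'a \<Rightarrow> complex"
  assumes R: "R \<in> rel_components n S" and A: "\<forall>t\<in>R. (\<Sum>i<n. v i (t i)) = a"
    and i: "i < n" and s: "s \<in> R" and t: "t \<in> R"
  shows "v i (s i) = v i (t i)"
proof -
  obtain F where F: "finite F" "F \<subseteq> S" "full n F" "s \<in> F" "t \<in> F"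
    using comp_rel[OF R s t] unfolding related_def by blast
  obtain x where x: "x \<in> S" "R = rcomp x" using comp_of[OF R] by blast
  have FR: "F \<subseteq> R"
  proof
    fix z assume "z \<in> F"
    then have "related n S s z" unfolding related_def using F by blast
    moreover have "related n S x s" using s x unfolding rcomp_def by blast
    ultimately show "z \<in> R" using x related_trans unfolding rcomp_def by blast
  qed
  define u where "u = (\<lambda>k y. v k y - (if k = 0 then a else 0))"
  have Z: "\<forall>z\<in>F. (\<Sum>k<n. u k (z k)) = 0"
  proof
    fix z assume "z \<in> F"
    then have "(\<Sum>k<n. v k (z k)) = a" using A FR by blast
    then show "(\<Sum>k<n. u k (z k)) = 0" unfolding u_def using npos by (simp add: sum_subtractf)
  qed
  have "u i (s i) = u i (t i)" using full_const[OF F(3) Z F(5) F(4) i] .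
  then show ?thesis unfolding u_def by simp
qed

lemma chain_const:
  fixes v :: "'a \<Rightarrow> complex"
  assumes H: "\<forall>R\<in>rel_components n S. \<forall>s\<in>R. \<forall>t\<in>R. v (s i) = v (t i)"
  shows "Rs \<noteq> [] \<Longrightarrow> set Rs \<subseteq> rel_components n S \<Longrightarrow> x \<in> proj i (hd Rs) \<Longrightarrow>
    y \<in> proj i (last Rs) \<Longrightarrow>
    (\<forall>j. Suc j < length Rs \<longrightarrow> proj i (Rs ! j) \<inter> proj i (Rs ! Suc j) \<noteq> {}) \<Longrightarrow> v x = v y"
proof (induction Rs arbitrary: x)
  case Nil then show ?case by simp
next
  case (Cons R Rs)
  show ?case
  proof (cases "Rs = []")
    case True
    then show ?thesis using Cons.prems H by (auto simp: proj_def)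
  next
    case False
    have "proj i ((R # Rs) ! 0) \<inter> proj i ((R # Rs) ! Suc 0) \<noteq> {}"
      using Cons.prems(5)[rule_format, of 0] False by simp
    then obtain z where z: "z \<in> proj i R" "z \<in> proj i (hd Rs)" using False by (cases Rs) auto
    have "v x = v z" using z Cons.prems H by (auto simp: proj_def)
    moreover have "v z = v y"
    proof (rule Cons.IH[OF False])
      show "set Rs \<subseteq> rel_components n S" using Cons.prems by auto
      show "z \<in> proj i (hd Rs)" by fact
      show "y \<in> proj i (last Rs)" using Cons.prems False by auto
      show "\<forall>j. Suc j < length Rs \<longrightarrow> proj i (Rs ! j) \<inter> proj i (Rs ! Suc j) \<noteq> {}"
      proof (intro allI impI)
        fix j assume "Suc j < length Rs"
        then show "proj i (Rs ! j) \<inter> proj i (Rs ! Suc j) \<noteq> {}"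
          using Cons.prems(5)[rule_format, of "Suc j"] by simp
      qed
    qed
    ultimately show ?thesis by simp
  qed
qed

lemma Erel_const:
  fixes v :: "'a \<Rightarrow> complex"
  assumes H: "\<forall>R\<in>rel_components n S. \<forall>s\<in>R. \<forall>t\<in>R. v (s i) = v (t i)"
    and E: "Erel n S i x y"
  shows "v x = v y"
  using E chain_const[OF H] unfolding Erel_def by blast

lemma Erel_refl: "c \<in> S \<Longrightarrow> Erel n S i (c i) (c i)"
  unfolding Erel_def
  apply (rule conjI, force simp: proj_def)
  apply (rule conjI, force simp: proj_def)
  apply (rule exI[where x="[rcomp c]"])
  using comp_mem comp_self by (auto simp: proj_def)

lemma eclass_mem: "c \<in> S \<Longrightarrow> c i \<in> eclass n S i (c i)"
  unfolding eclass_def using Erel_refl by blast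

lemma Erel_shift:
  assumes R: "R \<in> rel_components n S" and x: "x \<in> proj i R" and y: "y \<in> proj i R"
    and E: "Erel n S i x z"
  shows "Erel n S i y z"
proof -
  obtain Rs where Rs: "Rs \<noteq> []" "set Rs \<subseteq> rel_components n S" "x \<in> proj i (hd Rs)"
    "z \<in> proj i (last Rs)" "\<forall>j. Suc j < length Rs \<longrightarrow> proj i (Rs ! j) \<inter> proj i (Rs ! Suc j) \<noteq> {}"
    using E unfolding Erel_def by blast
  have yS: "y \<in> proj i S" using y comps_sub[OF R] by (auto simp: proj_def)
  have ch: "\<forall>j. Suc j < length (R # Rs) \<longrightarrow> proj i ((R # Rs) ! j) \<inter> proj i ((R # Rs) ! Suc j) \<noteq> {}"
  proof (intro allI impI)
    fix j assume j: "Suc j < length (R # Rs)"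
    show "proj i ((R # Rs) ! j) \<inter> proj i ((R # Rs) ! Suc j) \<noteq> {}"
    proof (cases j)
      case 0 then show ?thesis using x Rs(1,3) by (cases Rs) auto
    next
      case (Suc j') then show ?thesis using Rs(5) j by auto
    qed
  qed
  show ?thesis unfolding Erel_def
    apply (intro conjI yS)
    using E apply (simp add: Erel_def)
    apply (rule exI[where x="R # Rs"])
    using ch Rs R y by auto
qed

lemma eclass_eq:
  assumes "R \<in> rel_components n S" "x \<in> proj i R" "y \<in> proj i R"
  shows "eclass n S i x = eclass n S i y"
  unfolding eclass_def using Erel_shift assms by blast

lemma lift_val:
  fixes v :: "nat \<Rightarrow> 'a \<Rightarrow> complex"
  assumes H: "\<forall>i<n. \<forall>R\<in>rel_components n S. \<forall>s\<in>R. \<forall>t\<in>R. v i (s i) = v i (t i)"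
    and c: "c \<in> S" and i: "i < n"
  shows "v i (SOME y. y \<in> phi n S c i) = v i (c i)"
proof -
  have pc: "phi n S c i = eclass n S i (c i)" using i unfolding phi_def by simp
  have "\<exists>y. y \<in> phi n S c i" using eclass_mem[OF c] pc by blast
  then have "(SOME y. y \<in> phi n S c i) \<in> eclass n S i (c i)" using pc by (metis someI_ex)
  then have "Erel n S i (c i) (SOME y. y \<in> phi n S c i)" unfolding eclass_def by blast
  then show ?thesis using Erel_const[of "v i" i] H i by metis
qed

end

theorem lemma1:
  fixes n :: nat and X :: "nat \<Rightarrow> 'a set" and S C :: "(nat \<Rightarrow> 'a) set"
  assumes "\<forall>i<n. X i \<noteq> {}"
    and SX: "S \<subseteq> PiE {..<n} X"
    and gS: "good n S"
    and CS: "C \<subseteq> S"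
    and CR: "\<forall>R\<in>rel_components n S. \<exists>!c. c \<in> C \<inter> R"
  shows "phi n S ` C \<subseteq> PiE {..<n} (classes n S)
         \<and> good n (phi n S ` C)
         \<and> (full n S \<longleftrightarrow> full n (phi n S ` C))"
proof (cases "n = 0")
  case True
  then have "S = {}" using gS good0 by blast
  then have "C = {}" using CS by blast
  then show ?thesis using \<open>S = {}\<close> unfolding good_def by (auto simp: full_empty)
next
  case False
  then have npos: "0 < n" by simp
  note L = comp_mem[OF npos SX gS] comp_self[OF npos SX gS] comp_eq[OF npos SX gS]
    comp_of[OF npos SX gS]
  have P1: "phi n S ` C \<subseteq> PiE {..<n} (classes n S)"
  proof
    fix t assume "t \<in> phi n S ` C"
    then obtain c where c: "c \<in> C" "t = phi n S c" by blast
    have "eclass n S i (c i) \<in> classes n S i" if "i < n" for i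
    proof -
      have "c i \<in> proj i S" using c CS by (auto simp: proj_def)
      then have "{(x, y). Erel n S i x y} `` {c i} \<in> classes n S i"
        unfolding classes_def by (rule quotientI)
      moreover have "{(x, y). Erel n S i x y} `` {c i} = eclass n S i (c i)"
        unfolding eclass_def by auto
      ultimately show ?thesis by simp
    qed
    then show "t \<in> PiE {..<n} (classes n S)" using c unfolding phi_def by auto
  qed
  define cx where "cx x = (THE c. c \<in> C \<inter> rcomp n S x)" for x
  have cx: "cx x \<in> C \<and> cx x \<in> rcomp n S x" if "x \<in> S" for x
  proof -
    have "\<exists>!c. c \<in> C \<inter> rcomp n S x" using CR L(1)[OF that] by blast
    from theI'[OF this] show ?thesis unfolding cx_def by blast
  qed
  have cxC: "cx c = c" if "c \<in> C" for c
  proof -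
    have cS: "c \<in> S" using that CS by blast
    have "\<exists>!d. d \<in> C \<inter> rcomp n S c" using CR L(1)[OF cS] by blast
    then show ?thesis unfolding cx_def
      by (rule the1_equality) (use that L(2)[OF cS] in blast)
  qed
  have cxeq: "cx t = cx x" if "t \<in> rcomp n S x" for t x
    unfolding cx_def using L(3)[OF that] by simp
  have P2: "good n (phi n S ` C)"
    unfolding good_def
  proof
    fix f :: "(nat \<Rightarrow> 'a set) \<Rightarrow> complex"
    define g where "g x = f (phi n S (cx x))" for x
    obtain v where v: "\<forall>t\<in>S. g t = (\<Sum>i<n. v i (t i))" using gS unfolding good_def by blast
    have H: "\<forall>i<n. \<forall>R\<in>rel_components n S. \<forall>s\<in>R. \<forall>t\<in>R. v i (s i) = v i (t i)"
    proof (intro allI impI ballI)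
      fix i R s t assume i: "i < n" and R: "R \<in> rel_components n S" and s: "s \<in> R" and t: "t \<in> R"
      obtain x where x: "x \<in> S" "R = rcomp n S x" using L(4)[OF R] by blast
      have "\<forall>t\<in>R. (\<Sum>i<n. v i (t i)) = g x"
      proof
        fix t assume tR: "t \<in> R"
        then have tS: "t \<in> S" using comps_sub[OF npos SX gS R] by blast
        have "cx t = cx x" using cxeq tR x(2) by blast
        then have "g t = g x" unfolding g_def by simp
        then show "(\<Sum>i<n. v i (t i)) = g x" using v tS by simp
      qed
      then show "v i (s i) = v i (t i)" using comp_const[OF npos SX gS R _ i s t] by blast
    qed
    show "\<exists>u. \<forall>t\<in>phi n S ` C. f t = (\<Sum>i<n. u i (t i))"
    proof (intro exI ballI)
      fix t assume "t \<in> phi n S ` C"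
      then obtain c where c: "c \<in> C" "t = phi n S c" by blast
      have cS: "c \<in> S" using c CS by blast
      have "f t = g c" using c cxC unfolding g_def by simp
      also have "\<dots> = (\<Sum>i<n. v i (c i))" using v cS by blast
      also have "\<dots> = (\<Sum>i<n. v i (SOME y. y \<in> t i))"
        using lift_val[OF npos SX gS H cS] c by simp
      finally show "f t = (\<Sum>i<n. v i (SOME y. y \<in> t i))" .
    qed
  qed
  have P3: "full n S \<longleftrightarrow> full n (phi n S ` C)"
  proof (cases "S = {}")
    case True
    then have "C = {}" using CS by blast
    then show ?thesis using True by (simp add: full_empty)
  next
    case Sne: False
    then obtain x0 where x0: "x0 \<in> S" by blast
    have Cne: "phi n S ` C \<noteq> {}" using cx[OF x0] by blast
    show ?thesis
    proof
      assume fS: "full n S"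
      show "full n (phi n S ` C)"
      proof (rule full_crit[OF P2 _ Cne])
        show "phi n S ` C \<subseteq> PiE {..<n} (\<lambda>i. proj i (phi n S ` C))"
          by (auto simp: PiE_iff proj_def phi_def)
        fix u :: "nat \<Rightarrow> 'a set \<Rightarrow> complex"
        assume Z: "\<forall>t\<in>phi n S ` C. (\<Sum>i<n. u i (t i)) = 0"
        define w where "w i x = u i (eclass n S i x)" for i x
        have wc: "w i (c i) = u i (phi n S c i)" if "i < n" for i c
          unfolding w_def phi_def using that by simp
        have ws: "w i (s i) = w i (cx s i)" if "i < n" "s \<in> S" for i s
        proof -
          have "s i \<in> proj i (rcomp n S s)" "cx s i \<in> proj i (rcomp n S s)"
            using cx[OF that(2)] L(2)[OF that(2)] by (auto simp: proj_def)
          then have "eclass n S i (s i) = eclass n S i (cx s i)"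
            by (rule eclass_eq[OF npos SX gS L(1)[OF that(2)]])
          then show ?thesis unfolding w_def by simp
        qed
        have Zw: "\<forall>s\<in>S. (\<Sum>i<n. w i (s i)) = 0"
        proof
          fix s assume s: "s \<in> S"
          have "(\<Sum>i<n. w i (s i)) = (\<Sum>i<n. u i (phi n S (cx s) i))"
            using ws[OF _ s] wc by simp
          also have "\<dots> = 0" using Z cx[OF s] by blast
          finally show "(\<Sum>i<n. w i (s i)) = 0" .
        qed
        show "\<forall>i<n. \<forall>s\<in>phi n S ` C. \<forall>t\<in>phi n S ` C. u i (s i) = u i (t i)"
        proof (intro allI impI ballI)
          fix i s t assume i: "i < n" and s: "s \<in> phi n S ` C" and t: "t \<in> phi n S ` C"
          obtain c where c: "c \<in> C" "s = phi n S c" using s by blast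
          obtain d where d: "d \<in> C" "t = phi n S d" using t by blast
          have "w i (c i) = w i (x0 i)" "w i (d i) = w i (x0 i)"
            using full_const[OF fS Zw x0 _ i] c d CS by auto
          moreover have "u i (s i) = w i (c i)" using wc[OF i, of c] c(2) by simp
          moreover have "u i (t i) = w i (d i)" using wc[OF i, of d] d(2) by simp
          ultimately show "u i (s i) = u i (t i)" by simp
        qed
      qed
    next
      assume fC: "full n (phi n S ` C)"
      show "full n S"
      proof (rule full_crit[OF gS sub_PiE_proj[OF SX] Sne])
        fix v :: "nat \<Rightarrow> 'a \<Rightarrow> complex"
        assume Z: "\<forall>t\<in>S. (\<Sum>i<n. v i (t i)) = 0"
        have H: "\<forall>i<n. \<forall>R\<in>rel_components n S. \<forall>s\<in>R. \<forall>t\<in>R. v i (s i) = v i (t i)"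
        proof (intro allI impI ballI)
          fix i R s t assume i: "i < n" and R: "R \<in> rel_components n S" and s: "s \<in> R" and t: "t \<in> R"
          have "\<forall>t\<in>R. (\<Sum>i<n. v i (t i)) = 0" using Z comps_sub[OF npos SX gS R] by blast
          from comp_const[OF npos SX gS R this i s t] show "v i (s i) = v i (t i)" .
        qed
        define u where "u i K = v i (SOME y. y \<in> K)" for i K
        have uc: "u i (phi n S c i) = v i (c i)" if "i < n" "c \<in> S" for i c
          unfolding u_def using lift_val[OF npos SX gS H that(2) that(1)] .
        have Zu: "\<forall>t\<in>phi n S ` C. (\<Sum>i<n. u i (t i)) = 0"
        proof
          fix t assume "t \<in> phi n S ` C"
          then obtain c where c: "c \<in> C" "t = phi n S c" by blast
          then have cS: "c \<in> S" using CS by blast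
          have "(\<Sum>i<n. u i (t i)) = (\<Sum>i<n. v i (c i))" using uc cS c by simp
          then show "(\<Sum>i<n. u i (t i)) = 0" using Z cS by simp
        qed
        have vs: "v i (s i) = u i (phi n S (cx s) i)" if "i < n" "s \<in> S" for i s
        proof -
          have "v i (s i) = v i (cx s i)"
            using H[rule_format, OF that(1) L(1)[OF that(2)] L(2)[OF that(2)]] cx[OF that(2)] by blast
          moreover have "cx s \<in> S" using cx[OF that(2)] CS by blast
          ultimately show ?thesis using uc[OF that(1)] by simp
        qed
        show "\<forall>i<n. \<forall>s\<in>S. \<forall>t\<in>S. v i (s i) = v i (t i)"
        proof (intro allI impI ballI)
          fix i s t assume i: "i < n" and s: "s \<in> S" and t: "t \<in> S"
          have "u i (phi n S (cx s) i) = u i (phi n S (cx x0) i)"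
               "u i (phi n S (cx t) i) = u i (phi n S (cx x0) i)"
            using full_const[OF fC Zu imageI[of "cx x0" C "phi n S"] imageI[of "cx s" C "phi n S"] i]
              full_const[OF fC Zu imageI[of "cx x0" C "phi n S"] imageI[of "cx t" C "phi n S"] i]
              cx[OF s] cx[OF t] cx[OF x0] by blast+
          then show "v i (s i) = v i (t i)" using vs[OF i s] vs[OF i t] by simp
        qed
      qed
    qed
  qed
  show ?thesis using P1 P2 P3 by blast
qed

end
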